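(* Let $\mathbb{K}=(G,M,I)$ be a formal context and $A,B\in\operatorname{Ext}(\mathbb{K})$ with $A\prec_{\operatorname{Ext}(\mathbb{K})}B$. If $A$ is meet-irreducible in $\operatorname{Ext}(\mathbb{K})$, then $\mathcal{F}_{A,B}\cap\operatorname{Ext}(\mathbb{K})$ is a maximal meet-irreducible element of the lattice ${\downarrow}\operatorname{Ext}(\mathbb{K})$ of all closure systems on $G$ contained in $\operatorname{Ext}(\mathbb{K})$, ordered by inclusion.
   Context: A formal context is a triple $(G,M,I)$ with finite nonempty sets $G$, $M$ and $I\subseteq G\times M$; derivations $A'=\{m\mid\forall a\in A:(a,m)\in I\}$, $B'=\{g\mid\forall b\in B:(g,b)\in I\}$. $\operatorname{Ext}(\mathbb{K})=\{A\subseteq G\mid A''=A\}$, a lattice under inclusion with meet = intersection. A closure system on $G$ is a family of subsets of $G$ containing $G$ and closed under intersections. $\prec_{\operatorname{Ext}(\mathbb{K})}$ is the covering relation of $(\operatorname{Ext}(\mathbb{K}),\subseteq)$. $\mathcal{F}_{A,B}=\{D\subseteq G\mid A\not\subseteq D\ \text{or}\ B\subseteq D\}$. An element $x$ of a lattice is meet-irreducible if $x\neq\top$ and $x=\bigwedge Y$ implies $x\in Y$. *)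

theory Defs
  imports Main
begin

definition formal_context :: "'g set \<Rightarrow> 'm set \<Rightarrow> ('g \<times> 'm) set \<Rightarrow> bool" where
  "formal_context G M I \<longleftrightarrow> finite G \<and> G \<noteq> {} \<and> finite M \<and> M \<noteq> {} \<and> I \<subseteq> G \<times> M"

definition intent :: "'g set \<Rightarrow> 'm set \<Rightarrow> ('g \<times> 'm) set \<Rightarrow> 'g set \<Rightarrow> 'm set" where
  "intent G M I A = {m \<in> M. \<forall>a\<in>A. (a, m) \<in> I}"

definition extent :: "'g set \<Rightarrow> 'm set \<Rightarrow> ('g \<times> 'm) set \<Rightarrow> 'm set \<Rightarrow> 'g set" where
  "extent G M I B = {g \<in> G. \<forall>b\<in>B. (g, b) \<in> I}"

definition Ext :: "'g set \<Rightarrow> 'm set \<Rightarrow> ('g \<times> 'm) set \<Rightarrow> 'g set set" where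
  "Ext G M I = {A. A \<subseteq> G \<and> extent G M I (intent G M I A) = A}"

definition closure_system :: "'g set \<Rightarrow> 'g set set \<Rightarrow> bool" where
  "closure_system G C \<longleftrightarrow> C \<subseteq> Pow G \<and> G \<in> C \<and> (\<forall>S. S \<subseteq> C \<and> S \<noteq> {} \<longrightarrow> \<Inter>S \<in> C)"

definition covers :: "'a set set \<Rightarrow> 'a set \<Rightarrow> 'a set \<Rightarrow> bool" where
  "covers L A B \<longleftrightarrow> A \<in> L \<and> B \<in> L \<and> A \<subset> B \<and> \<not> (\<exists>C\<in>L. A \<subset> C \<and> C \<subset> B)"

definition is_meet :: "'a set set \<Rightarrow> 'a set set \<Rightarrow> 'a set \<Rightarrow> bool" where
  "is_meet L Y x \<longleftrightarrow> x \<in> L \<and> (\<forall>y\<in>Y. x \<subseteq> y) \<and> (\<forall>z\<in>L. (\<forall>y\<in>Y. z \<subseteq> y) \<longrightarrow> z \<subseteq> x)"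

definition is_top :: "'a set set \<Rightarrow> 'a set \<Rightarrow> bool" where
  "is_top L x \<longleftrightarrow> x \<in> L \<and> (\<forall>z\<in>L. z \<subseteq> x)"

definition meet_irreducible :: "'a set set \<Rightarrow> 'a set \<Rightarrow> bool" where
  "meet_irreducible L x \<longleftrightarrow> x \<in> L \<and> \<not> is_top L x \<and> (\<forall>Y. Y \<subseteq> L \<and> is_meet L Y x \<longrightarrow> x \<in> Y)"

definition maximal_meet_irreducible :: "'a set set \<Rightarrow> 'a set \<Rightarrow> bool" where
  "maximal_meet_irreducible L x \<longleftrightarrow> meet_irreducible L x \<and>
     \<not> (\<exists>y. meet_irreducible L y \<and> x \<subset> y)"

definition F_AB :: "'g set \<Rightarrow> 'g set \<Rightarrow> 'g set \<Rightarrow> 'g set set" where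
  "F_AB G A B = {D. D \<subseteq> G \<and> (\<not> A \<subseteq> D \<or> B \<subseteq> D)}"

definition down_Ext :: "'g set \<Rightarrow> 'm set \<Rightarrow> ('g \<times> 'm) set \<Rightarrow> 'g set set set" where
  "down_Ext G M I = {C. closure_system G C \<and> C \<subseteq> Ext G M I}"

end

theory Submission
  imports Defs
begin

lemma Ext_closure:
  assumes "formal_context G M I"
  shows "closure_system G (Ext G M I)"
proof -
  have G: "G \<in> Ext G M I"
    unfolding Ext_def extent_def intent_def by auto
  have "\<Inter>S \<in> Ext G M I" if "S \<subseteq> Ext G M I" "S \<noteq> {}" for S
  proof -
    have sub: "\<Inter>S \<subseteq> G" using that unfolding Ext_def by blast
    have "extent G M I (intent G M I (\<Inter>S)) \<subseteq> D" if "D \<in> S" for D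
    proof -
      have "intent G M I D \<subseteq> intent G M I (\<Inter>S)"
        using that unfolding intent_def by blast
      hence "extent G M I (intent G M I (\<Inter>S)) \<subseteq> extent G M I (intent G M I D)"
        unfolding extent_def by blast
      thus ?thesis using that \<open>S \<subseteq> Ext G M I\<close> unfolding Ext_def by auto
    qed
    moreover have "\<Inter>S \<subseteq> extent G M I (intent G M I (\<Inter>S))"
      using sub unfolding extent_def intent_def by blast
    ultimately show ?thesis using sub unfolding Ext_def by blast
  qed
  moreover have "Ext G M I \<subseteq> Pow G" unfolding Ext_def by auto
  ultimately show ?thesis using G unfolding closure_system_def by blast
qed

lemma cs_Int2:
  assumes "closure_system G C" "X \<in> C" "Y \<in> C"
  shows "X \<inter> Y \<in> C"
proof -
  have "\<forall>S. S \<subseteq> C \<and> S \<noteq> {} \<longrightarrow> \<Inter>S \<in> C" using assms(1) unfolding closure_system_def by blast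
  moreover have "{X, Y} \<subseteq> C \<and> {X, Y} \<noteq> {}" using assms(2,3) by simp
  ultimately have "\<Inter>{X, Y} \<in> C" by blast
  thus ?thesis by simp
qed

theorem proposition5:
  fixes G :: "'g set" and M :: "'m set" and I :: "('g \<times> 'm) set" and A B :: "'g set"
  assumes "formal_context G M I"
    and "A \<in> Ext G M I" and "B \<in> Ext G M I"
    and "covers (Ext G M I) A B"
    and "meet_irreducible (Ext G M I) A"
  shows "maximal_meet_irreducible (down_Ext G M I) (F_AB G A B \<inter> Ext G M I)"
proof -
  define E where "E = Ext G M I"
  define F where "F = F_AB G A B \<inter> E"
  define L where "L = down_Ext G M I"
  have Ecs: "closure_system G E" using Ext_closure[OF assms(1)] E_def by simp
  have AE: "A \<in> E" and BE: "B \<in> E" using assms E_def by auto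
  have AB: "A \<subset> B" and nocov: "\<not> (\<exists>C\<in>E. A \<subset> C \<and> C \<subset> B)"
    using assms(4) unfolding covers_def E_def by auto
  have EPow: "E \<subseteq> Pow G" using Ecs unfolding closure_system_def by blast
  have key: "D \<inter> B = A" if "D \<in> E" "A \<subseteq> D" "\<not> B \<subseteq> D" for D
  proof -
    have "D \<inter> B \<in> E" using cs_Int2[OF Ecs that(1) BE] .
    moreover have "A \<subseteq> D \<inter> B" using that AB by blast
    moreover have "D \<inter> B \<noteq> B" using that by blast
    ultimately show ?thesis using nocov AB by blast
  qed
  have inC: "A \<in> C" if hC: "closure_system G C" "F \<subseteq> C" "C \<subseteq> E" "C \<noteq> F" for C
  proof -
    obtain D where D: "D \<in> C" "D \<notin> F" using hC(2,4) by blast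
    have DE: "D \<in> E" using D hC by blast
    hence "D \<subseteq> G" using EPow by blast
    hence "A \<subseteq> D" "\<not> B \<subseteq> D" using D DE unfolding F_def F_AB_def by auto
    hence eq: "D \<inter> B = A" using key DE by blast
    have "B \<in> F" using BE EPow unfolding F_def F_AB_def by auto
    hence "B \<in> C" using hC by blast
    hence "D \<inter> B \<in> C" using cs_Int2[OF hC(1) D(1)] by blast
    thus ?thesis using eq by simp
  qed
  have AnF: "A \<notin> F" using AB unfolding F_def F_AB_def by auto
  have FE: "F \<subseteq> E" unfolding F_def by blast
  have Fcs: "closure_system G F"
  proof -
    have "G \<in> F" using Ecs BE EPow unfolding closure_system_def F_def F_AB_def by auto
    moreover have "\<Inter>S \<in> F" if "S \<subseteq> F" "S \<noteq> {}" for S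
    proof -
      have "S \<subseteq> E" using that FE by blast
      hence "\<Inter>S \<in> E" using Ecs that(2) unfolding closure_system_def by blast
      moreover have "\<Inter>S \<subseteq> G" using calculation EPow by blast
      moreover have "\<not> A \<subseteq> \<Inter>S \<or> B \<subseteq> \<Inter>S"
      proof (cases "A \<subseteq> \<Inter>S")
        case True
        have "B \<subseteq> D" if "D \<in> S" for D
        proof -
          have "A \<subseteq> D" using True that by blast
          moreover have "D \<in> F_AB G A B" using that \<open>S \<subseteq> F\<close> unfolding F_def by blast
          ultimately show ?thesis unfolding F_AB_def by blast
        qed
        thus ?thesis by blast
      qed simp
      ultimately show ?thesis unfolding F_def F_AB_def by blast
    qed
    moreover have "F \<subseteq> Pow G" using FE EPow by blast
    ultimately show ?thesis unfolding closure_system_def by blast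
  qed
  have EL: "E \<in> L" using Ecs unfolding L_def down_Ext_def E_def by blast
  have FL: "F \<in> L" using Fcs FE unfolding L_def down_Ext_def E_def by blast
  have notopF: "\<not> is_top L F" using EL AE AnF unfolding is_top_def by blast
  have irrF: "F \<in> Y" if Y: "Y \<subseteq> L" "is_meet L Y F" for Y
  proof (rule ccontr)
    assume nY: "F \<notin> Y"
    show False
    proof (cases "Y = {}")
      case True
      then show ?thesis using Y(2) EL AE AnF unfolding is_meet_def by blast
    next
      case False
      have "\<Inter>Y \<in> L"
      proof -
        have cs: "\<And>C. C \<in> Y \<Longrightarrow> closure_system G C \<and> C \<subseteq> E"
          using Y(1) unfolding L_def down_Ext_def E_def by blast
        have "closure_system G (\<Inter>Y)"
          unfolding closure_system_def
        proof (intro conjI allI impI)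
          show "\<Inter>Y \<subseteq> Pow G" using cs False unfolding closure_system_def by blast
          show "G \<in> \<Inter>Y" using cs unfolding closure_system_def by blast
          fix S assume S: "S \<subseteq> \<Inter>Y \<and> S \<noteq> {}"
          show "\<Inter>S \<in> \<Inter>Y"
          proof
            fix C assume "C \<in> Y"
            hence "closure_system G C" "S \<subseteq> C" using cs S by blast+
            thus "\<Inter>S \<in> C" using S unfolding closure_system_def by blast
          qed
        qed
        moreover have "\<Inter>Y \<subseteq> E" using cs False by blast
        ultimately show ?thesis unfolding L_def down_Ext_def E_def by blast
      qed
      hence sub: "\<Inter>Y \<subseteq> F" using Y(2) unfolding is_meet_def by blast
      have "A \<in> C" if "C \<in> Y" for C
      proof -
        have "closure_system G C" "C \<subseteq> E"
          using Y(1) that unfolding L_def down_Ext_def E_def by blast+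
        moreover have "F \<subseteq> C" using Y(2) that unfolding is_meet_def by blast
        moreover have "C \<noteq> F" using nY that by blast
        ultimately show ?thesis using inC by blast
      qed
      hence "A \<in> \<Inter>Y" by blast
      thus False using sub AnF by blast
    qed
  qed
  have mi: "meet_irreducible L F"
    unfolding meet_irreducible_def using FL notopF irrF by blast
  have nomax: False if y: "meet_irreducible L y" "F \<subset> y" for y
  proof -
    have yL: "y \<in> L" using y unfolding meet_irreducible_def by blast
    hence ycs: "closure_system G y" and yE: "y \<subseteq> E"
      unfolding L_def down_Ext_def E_def by blast+
    have Ay: "A \<in> y" using inC[OF ycs _ yE] y(2) by blast
    have "X \<in> y" if "X \<in> E" for X
    proof (cases "X \<in> F")
      case True then show ?thesis using y(2) by blast
    next
      case False
      have "X \<subseteq> G" using that EPow by blast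
      hence XA: "A \<subseteq> X" "\<not> B \<subseteq> X" using False that unfolding F_def F_AB_def by auto
      have eq: "X \<inter> B = A" using key[OF that XA] .
      show ?thesis
      proof (rule ccontr)
        assume "X \<notin> y"
        hence "X \<noteq> A" using Ay by blast
        have "is_meet E {X, B} A"
          unfolding is_meet_def
        proof (intro conjI ballI impI)
          show "A \<in> E" using AE .
          fix yy assume "yy \<in> {X, B}" thus "A \<subseteq> yy" using eq by blast
        next
          fix z assume "z \<in> E" "\<forall>yy\<in>{X, B}. z \<subseteq> yy"
          hence "z \<subseteq> X \<inter> B" by blast
          thus "z \<subseteq> A" using eq by simp
        qed
        moreover have "{X, B} \<subseteq> E" using that BE by blast
        ultimately have "A \<in> {X, B}" using assms(5) unfolding meet_irreducible_def E_def by blast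
        thus False using \<open>X \<noteq> A\<close> AB by blast
      qed
    qed
    hence "is_top L y" using yL yE unfolding is_top_def L_def down_Ext_def E_def by blast
    thus False using y(1) unfolding meet_irreducible_def by blast
  qed
  have "maximal_meet_irreducible L F"
    unfolding maximal_meet_irreducible_def using mi nomax by blast
  thus ?thesis unfolding F_def L_def E_def .
qed

end
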